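(* Let $I=\langle N,M,V\rangle$ be an ordered instance of goods. If there is a good $g\in M$ such that at most one agent in $N$ does not have an MMS partition in which the bundle containing $g$ has cardinality two, then there exist an agent $i\in N$ and a good $g'\in M\setminus\{g\}$ such that allocating $\{g,g'\}$ to $i$ is a valid reduction.
   Context: An instance $I=\langle N,M,V\rangle$ has agents $N=\{1,\dots,n\}$, goods $M=\{1,\dots,m\}$ and additive valuations $v_i$ with $v_i(\emptyset)=0$, $v_i(S)=\sum_{g\in S}v_i(\{g\})$, $v_{ij}:=v_i(\{j\})\ge 0$. It is ordered if $v_{ij}\ge v_{i(j+1)}$ for all $i$ and $1\le j<m$. An allocation ($n$-partition) is an ordered $n$-tuple of pairwise disjoint, possibly empty subsets of $M$ with union $M$. The maximin share of $i$ in $I$ is $\mu_i^I=\max_A\min_j v_i(A_j)$ over all allocations; an MMS partition of $i$ is an allocation $A$ with $v_i(A_j)\ge\mu_i^I$ for all $j$. Removing agents $N'\subseteq N$ and items $M'\subseteq M$ is a valid reduction if the items of $M'$ can be allocated to the agents of $N'$ so that each $i'\in N'$ receives a bundle $B_{i'}$ with $v_{i'}(B_{i'})\ge\mu_{i'}^I$, and every $i\in N\setminus N'$ satisfies $\mu_i^{I'}\ge\mu_i^I$, where $I'=\langle N\setminus N', M\setminus M', V\rangle$ (valuations restricted, maximin share computed with $|N\setminus N'|$ bundles). "Allocating $B$ to $i$ is a valid reduction" means this holds with $N'=\{i\}$, $M'=B$. *)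

theory Defs
  imports Complex_Main
begin

(* Agents are 1..n, goods are 1..m; v i j = value of agent i for good j. *)

definition val :: "(nat \<Rightarrow> nat \<Rightarrow> real) \<Rightarrow> nat \<Rightarrow> nat set \<Rightarrow> real" where
  "val v i B = (\<Sum>g\<in>B. v i g)"

definition is_partition :: "nat \<Rightarrow> nat set \<Rightarrow> (nat \<Rightarrow> nat set) \<Rightarrow> bool" where
  "is_partition k S A \<longleftrightarrow>
     (\<forall>j\<in>{1..k}. A j \<subseteq> S) \<and> (\<Union>j\<in>{1..k}. A j) = S \<and>
     (\<forall>j\<in>{1..k}. \<forall>j'\<in>{1..k}. j \<noteq> j' \<longrightarrow> A j \<inter> A j' = {})"

definition mms :: "(nat \<Rightarrow> nat \<Rightarrow> real) \<Rightarrow> nat \<Rightarrow> nat set \<Rightarrow> nat \<Rightarrow> real" where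
  "mms v k S i = Max {Min ((\<lambda>j. val v i (A j)) ` {1..k}) | A. is_partition k S A}"

definition is_mms_partition ::
  "(nat \<Rightarrow> nat \<Rightarrow> real) \<Rightarrow> nat \<Rightarrow> nat \<Rightarrow> nat \<Rightarrow> (nat \<Rightarrow> nat set) \<Rightarrow> bool" where
  "is_mms_partition v n m i A \<longleftrightarrow> is_partition n {1..m} A \<and>
     (\<forall>j\<in>{1..n}. val v i (A j) \<ge> mms v n {1..m} i)"

definition ordered_instance :: "(nat \<Rightarrow> nat \<Rightarrow> real) \<Rightarrow> nat \<Rightarrow> nat \<Rightarrow> bool" where
  "ordered_instance v n m \<longleftrightarrow>
     (\<forall>i\<in>{1..n}. \<forall>j\<in>{1..m}. v i j \<ge> 0) \<and>
     (\<forall>i\<in>{1..n}. \<forall>j. 1 \<le> j \<and> j < m \<longrightarrow> v i j \<ge> v i (j + 1))"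

definition valid_reduction_single ::
  "(nat \<Rightarrow> nat \<Rightarrow> real) \<Rightarrow> nat \<Rightarrow> nat \<Rightarrow> nat \<Rightarrow> nat set \<Rightarrow> bool" where
  "valid_reduction_single v n m i B \<longleftrightarrow>
     val v i B \<ge> mms v n {1..m} i \<and>
     (\<forall>i'\<in>{1..n} - {i}. mms v (n - 1) ({1..m} - B) i' \<ge> mms v n {1..m} i')"

end

theory Submission
  imports Defs "HOL-Library.FuncSet"
begin

lemma fin_F:
  assumes "finite S"
  shows "finite {Min ((\<lambda>j. val v i (A j)) ` {1..k}) | A. is_partition k S A}"
proof -
  have "{Min ((\<lambda>j. val v i (A j)) ` {1..k}) | A. is_partition k S A}
     \<subseteq> (\<lambda>f. Min ((\<lambda>j. val v i (f j)) ` {1..k})) ` ({1..k} \<rightarrow>\<^sub>E Pow S)"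
  proof
    fix x assume "x \<in> {Min ((\<lambda>j. val v i (A j)) ` {1..k}) | A. is_partition k S A}"
    then obtain A where x: "x = Min ((\<lambda>j. val v i (A j)) ` {1..k})" and p: "is_partition k S A"
      by blast
    have "restrict A {1..k} \<in> {1..k} \<rightarrow>\<^sub>E Pow S" using p unfolding is_partition_def by auto
    moreover have "x = Min ((\<lambda>j. val v i (restrict A {1..k} j)) ` {1..k})"
      using x by (auto intro!: arg_cong[where f=Min] image_cong)
    ultimately show "x \<in> (\<lambda>f. Min ((\<lambda>j. val v i (f j)) ` {1..k})) ` ({1..k} \<rightarrow>\<^sub>E Pow S)"
      by blast
  qed
  then show ?thesis by (rule finite_subset) (simp add: finite_PiE assms)
qed

lemma mms_ge:
  assumes "finite S" "k \<ge> 1" "is_partition k S A" "\<forall>j\<in>{1..k}. val v i (A j) \<ge> \<mu>"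
  shows "mms v k S i \<ge> \<mu>"
proof -
  have "Min ((\<lambda>j. val v i (A j)) ` {1..k}) \<ge> \<mu>"
    using assms(2,4) by (subst Min_ge_iff) auto
  also have "Min ((\<lambda>j. val v i (A j)) ` {1..k}) \<le> mms v k S i"
    unfolding mms_def using assms(3) by (intro Max_ge fin_F assms(1)) blast
  finally show ?thesis .
qed

lemma mms_attained:
  assumes "finite S" "k \<ge> 1"
  shows "\<exists>A. is_partition k S A \<and> (\<forall>j\<in>{1..k}. val v i (A j) \<ge> mms v k S i)"
proof -
  define A0 where "A0 j = (if j = 1 then S else {})" for j :: nat
  have "is_partition k S A0" unfolding is_partition_def A0_def using assms(2) by auto
  then have ne: "{Min ((\<lambda>j. val v i (A j)) ` {1..k}) | A. is_partition k S A} \<noteq> {}" by blast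
  have "mms v k S i \<in> {Min ((\<lambda>j. val v i (A j)) ` {1..k}) | A. is_partition k S A}"
    unfolding mms_def by (rule Max_in[OF fin_F[OF assms(1)] ne])
  then obtain A where p: "is_partition k S A" and e: "mms v k S i = Min ((\<lambda>j. val v i (A j)) ` {1..k})"
    by blast
  have "\<forall>j\<in>{1..k}. val v i (A j) \<ge> mms v k S i"
    unfolding e by (auto intro: Min_le)
  with p show ?thesis by blast
qed

lemma val_union: "finite A \<Longrightarrow> finite B \<Longrightarrow> A \<inter> B = {} \<Longrightarrow> val v i (A \<union> B) = val v i A + val v i B"
  unfolding val_def by (rule sum.union_disjoint)

lemma val_remove: "finite A \<Longrightarrow> x \<in> A \<Longrightarrow> val v i (A - {x}) = val v i A - v i x"
  unfolding val_def by (simp add: sum_diff1)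

lemma val_nonneg: "\<forall>x\<in>S. v i x \<ge> 0 \<Longrightarrow> B \<subseteq> S \<Longrightarrow> val v i B \<ge> 0"
  unfolding val_def by (rule sum_nonneg) auto

lemma reduce:
  fixes v :: "nat \<Rightarrow> nat \<Rightarrow> real"
  assumes P: "is_partition n S P" and fin: "finite S" and n2: "n \<ge> 2"
    and b0: "b0 \<in> {1..n}" "g \<in> P b0" and g': "g' \<in> S" "g \<noteq> g'"
    and nn: "\<forall>x\<in>S. v i x \<ge> 0"
    and cond: "g' \<in> P b0 \<or> val v i (P b0 - {g}) \<ge> v i g'"
    and big: "\<forall>j\<in>{1..n}. val v i (P j) \<ge> \<mu>"
  shows "mms v (n-1) (S - {g,g'}) i \<ge> \<mu>"
proof -
  have Psub: "\<And>j. j \<in> {1..n} \<Longrightarrow> P j \<subseteq> S" using P unfolding is_partition_def by blast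
  have Pdis: "\<And>j j'. j \<in> {1..n} \<Longrightarrow> j' \<in> {1..n} \<Longrightarrow> j \<noteq> j' \<Longrightarrow> P j \<inter> P j' = {}"
    using P unfolding is_partition_def by blast
  have Pun: "\<And>x. x \<in> S \<Longrightarrow> \<exists>j\<in>{1..n}. x \<in> P j" using P unfolding is_partition_def by blast
  have Pfin: "\<And>j. j \<in> {1..n} \<Longrightarrow> finite (P j)" using Psub fin finite_subset by blast
  from Pun g' obtain c0 where c0: "c0 \<in> {1..n}" "g' \<in> P c0" by blast
  define d where "d = (if c0 \<noteq> b0 then c0 else if b0 = 1 then 2 else (1::nat))"
  have d: "d \<in> {1..n}" "d \<noteq> b0" using c0 b0 n2 by (auto simp: d_def)
  have c0d: "c0 = d \<or> c0 = b0" by (auto simp: d_def)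
  define \<sigma> where "\<sigma> j = (if j = b0 then n else j)" for j
  define Q where "Q j = (if \<sigma> j = d then (P d - {g'}) \<union> (P b0 - {g,g'}) else P (\<sigma> j))" for j
  have \<sigma>_in: "\<And>j. j \<in> {1..n-1} \<Longrightarrow> \<sigma> j \<in> {1..n} - {b0}"
    using b0 by (auto simp: \<sigma>_def)
  have \<sigma>_surj: "\<And>k. k \<in> {1..n} - {b0} \<Longrightarrow> \<exists>j\<in>{1..n-1}. \<sigma> j = k"
  proof -
    fix k assume k: "k \<in> {1..n} - {b0}"
    show "\<exists>j\<in>{1..n-1}. \<sigma> j = k"
    proof (cases "k = n")
      case True
      then have "b0 \<in> {1..n-1}" "\<sigma> b0 = k" using k b0 by (auto simp: \<sigma>_def)
      then show ?thesis by blast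
    next
      case False
      then have "k \<in> {1..n-1}" "\<sigma> k = k" using k by (auto simp: \<sigma>_def)
      then show ?thesis by blast
    qed
  qed
  have \<sigma>_inj: "\<And>j j'. j \<in> {1..n-1} \<Longrightarrow> j' \<in> {1..n-1} \<Longrightarrow> j \<noteq> j' \<Longrightarrow> \<sigma> j \<noteq> \<sigma> j'"
    by (auto simp: \<sigma>_def)
  have gnot: "\<And>k. k \<in> {1..n} \<Longrightarrow> k \<noteq> b0 \<Longrightarrow> g \<notin> P k" using Pdis b0 by blast
  have g'not: "\<And>k. k \<in> {1..n} \<Longrightarrow> k \<noteq> c0 \<Longrightarrow> g' \<notin> P k" using Pdis c0 by blast
  have Qsub: "\<And>j. j \<in> {1..n-1} \<Longrightarrow> Q j \<subseteq> S - {g,g'}"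
  proof -
    fix j assume j: "j \<in> {1..n-1}"
    have k: "\<sigma> j \<in> {1..n}" "\<sigma> j \<noteq> b0" using \<sigma>_in[OF j] by auto
    show "Q j \<subseteq> S - {g,g'}"
    proof (cases "\<sigma> j = d")
      case True
      then show ?thesis using Psub[OF d(1)] Psub[OF b0(1)] gnot[OF d] by (auto simp: Q_def)
    next
      case False
      then have "\<sigma> j \<noteq> c0" using c0d k by auto
      then show ?thesis using Psub[OF k(1)] gnot[OF k] g'not[OF k(1)] False by (auto simp: Q_def)
    qed
  qed
  have part: "is_partition (n-1) (S - {g,g'}) Q"
    unfolding is_partition_def
  proof (intro conjI ballI impI)
    fix j assume "j \<in> {1..n-1}" then show "Q j \<subseteq> S - {g,g'}" by (rule Qsub)
  next
    show "(\<Union>j\<in>{1..n-1}. Q j) = S - {g,g'}"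
    proof
      show "(\<Union>j\<in>{1..n-1}. Q j) \<subseteq> S - {g,g'}" using Qsub by blast
    next
      show "S - {g,g'} \<subseteq> (\<Union>j\<in>{1..n-1}. Q j)"
      proof
        fix x assume x: "x \<in> S - {g,g'}"
        then obtain k where k: "k \<in> {1..n}" "x \<in> P k" using Pun by blast
        show "x \<in> (\<Union>j\<in>{1..n-1}. Q j)"
        proof (cases "k = b0")
          case True
          obtain j where "j \<in> {1..n-1}" "\<sigma> j = d" using \<sigma>_surj d by blast
          then show ?thesis using x k True by (auto simp: Q_def)
        next
          case False
          obtain j where jj: "j \<in> {1..n-1}" "\<sigma> j = k" using \<sigma>_surj k False by blast
          have "x \<in> Q j" using jj x k by (auto simp: Q_def)
          then show ?thesis using jj by blast
        qed
      qed
    qed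
  next
    fix j j' assume j: "j \<in> {1..n-1}" and j': "j' \<in> {1..n-1}" and ne: "j \<noteq> j'"
    have s: "\<sigma> j \<noteq> \<sigma> j'" using \<sigma>_inj[OF j j' ne] .
    have k: "\<sigma> j \<in> {1..n}" "\<sigma> j \<noteq> b0" using \<sigma>_in[OF j] by auto
    have k': "\<sigma> j' \<in> {1..n}" "\<sigma> j' \<noteq> b0" using \<sigma>_in[OF j'] by auto
    have Qj: "Q j \<subseteq> P (\<sigma> j) \<union> (if \<sigma> j = d then P b0 else {})" by (auto simp: Q_def)
    have Qj': "Q j' \<subseteq> P (\<sigma> j') \<union> (if \<sigma> j' = d then P b0 else {})" by (auto simp: Q_def)
    have "P (\<sigma> j) \<inter> P (\<sigma> j') = {}" using Pdis k k' s by blast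
    moreover have "P (\<sigma> j) \<inter> P b0 = {}" using Pdis k b0 by blast
    moreover have "P (\<sigma> j') \<inter> P b0 = {}" using Pdis k' b0 by blast
    ultimately show "Q j \<inter> Q j' = {}" using Qj Qj' s by (cases "\<sigma> j = d"; cases "\<sigma> j' = d"; simp; blast)
  qed
  have vals: "\<forall>j\<in>{1..n-1}. val v i (Q j) \<ge> \<mu>"
  proof
    fix j assume j: "j \<in> {1..n-1}"
    have k: "\<sigma> j \<in> {1..n}" "\<sigma> j \<noteq> b0" using \<sigma>_in[OF j] by auto
    show "val v i (Q j) \<ge> \<mu>"
    proof (cases "\<sigma> j = d")
      case False
      then show ?thesis using big k by (auto simp: Q_def)
    next
      case True
      have Qe: "Q j = (P d - {g'}) \<union> (P b0 - {g,g'})" using True by (simp add: Q_def)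
      have dis: "(P d - {g'}) \<inter> (P b0 - {g,g'}) = {}" using Pdis d b0 by blast
      have "val v i (Q j) = val v i (P d - {g'}) + val v i (P b0 - {g,g'})"
        unfolding Qe using Pfin d b0 dis by (intro val_union) auto
      also have "\<dots> \<ge> val v i (P d)"
      proof (cases "c0 = b0")
        case True
        then have "g' \<notin> P d" using g'not d by auto
        then have "P d - {g'} = P d" by auto
        moreover have "val v i (P b0 - {g,g'}) \<ge> 0"
          using val_nonneg[of S v i "P b0 - {g,g'}"] nn Psub[OF b0(1)] by blast
        ultimately show ?thesis by simp
      next
        case False
        then have dc: "d = c0" by (simp add: d_def)
        have "g' \<notin> P b0" using g'not[OF b0(1)] False by auto
        then have e2: "P b0 - {g,g'} = P b0 - {g}" by auto
        have "val v i (P d - {g'}) = val v i (P d) - v i g'"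
          using dc c0 Pfin by (intro val_remove) auto
        with e2 cond \<open>g' \<notin> P b0\<close> show ?thesis by simp
      qed
      finally show ?thesis using big d by force
    qed
  qed
  show ?thesis
    using mms_ge[OF _ _ part vals] fin n2 by auto
qed

lemma ordered_mono:
  assumes "ordered_instance v n m" "i \<in> {1..n}" "1 \<le> a" "a \<le> b" "b \<le> m"
  shows "v i b \<le> v i a"
proof -
  have "\<forall>k. a + k \<le> m \<longrightarrow> v i (a + k) \<le> v i a"
  proof
    fix k show "a + k \<le> m \<longrightarrow> v i (a + k) \<le> v i a"
    proof (induction k)
      case 0 then show ?case by simp
    next
      case (Suc k)
      show ?case
      proof
        assume h: "a + Suc k \<le> m"
        have "v i (a + k + 1) \<le> v i (a + k)"
          using assms(1,2,3) h unfolding ordered_instance_def by auto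
        then show "v i (a + Suc k) \<le> v i a" using Suc h by simp
      qed
    qed
  qed
  then show ?thesis using assms(4,5)
    by (metis le_add_diff_inverse)
qed

theorem lemma22:
  fixes v :: "nat \<Rightarrow> nat \<Rightarrow> real" and n m :: nat and g :: nat
  assumes "n \<ge> 2"
    and "ordered_instance v n m"
    and "g \<in> {1..m}"
    and "card {i\<in>{1..n}. \<not> (\<exists>A. is_mms_partition v n m i A \<and>
                 (\<exists>j\<in>{1..n}. g \<in> A j \<and> card (A j) = 2))} \<le> 1"
  shows "\<exists>i\<in>{1..n}. \<exists>g'\<in>{1..m} - {g}. valid_reduction_single v n m i {g, g'}"
proof -
  define Bad where "Bad = {i\<in>{1..n}. \<not> (\<exists>A. is_mms_partition v n m i A \<and>
                 (\<exists>j\<in>{1..n}. g \<in> A j \<and> card (A j) = 2))}"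
  have cB: "card Bad \<le> 1" using assms(4) unfolding Bad_def .
  have fB: "finite Bad" unfolding Bad_def by auto
  have Bsub: "Bad \<subseteq> {1..n}" unfolding Bad_def by auto
  define goodh where "goodh i h \<longleftrightarrow> h \<noteq> g \<and> (\<exists>A. is_mms_partition v n m i A \<and> (\<exists>j\<in>{1..n}. A j = {g,h}))" for i h
  have good_ex: "\<exists>h. goodh i h" if iB: "i \<in> {1..n}" "i \<notin> Bad" for i
  proof -
    obtain A j where A: "is_mms_partition v n m i A" "j \<in> {1..n}" "g \<in> A j" "card (A j) = 2"
      using iB unfolding Bad_def by blast
    then obtain x y where xy: "A j = {x,y}" "x \<noteq> y" by (auto simp: card_2_iff)
    show ?thesis
    proof (cases "x = g")
      case True
      then have "goodh i y" unfolding goodh_def using A xy by blast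
      then show ?thesis by blast
    next
      case False
      then have "y = g" using A xy by auto
      then have "goodh i x" unfolding goodh_def using A xy False by (metis insert_commute)
      then show ?thesis by blast
    qed
  qed
  have goodh_props: "h \<in> {1..m}" "\<exists>A b0. is_partition n {1..m} A \<and> b0 \<in> {1..n} \<and> A b0 = {g,h}
       \<and> (\<forall>j\<in>{1..n}. val v i (A j) \<ge> mms v n {1..m} i)" if gh: "goodh i h" for i h
  proof -
    obtain A j where A: "is_mms_partition v n m i A" "j \<in> {1..n}" "A j = {g,h}"
      using gh unfolding goodh_def by blast
    have "A j \<subseteq> {1..m}" using A unfolding is_mms_partition_def is_partition_def by blast
    then show "h \<in> {1..m}" using A by auto
    show "\<exists>A b0. is_partition n {1..m} A \<and> b0 \<in> {1..n} \<and> A b0 = {g,h}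
       \<and> (\<forall>j\<in>{1..n}. val v i (A j) \<ge> mms v n {1..m} i)"
      using A unfolding is_mms_partition_def by blast
  qed
  obtain i0 where i0: "i0 \<in> {1..n}" "i0 \<notin> Bad"
  proof -
    have "\<not> {1..n} \<subseteq> Bad"
    proof
      assume "{1..n} \<subseteq> Bad"
      then have "card {1..n} \<le> card Bad" using fB by (rule card_mono[rotated])
      then show False using cB assms(1) by simp
    qed
    then show ?thesis using that by blast
  qed
  define hs where "hs = {h. \<exists>i\<in>{1..n}. i \<notin> Bad \<and> goodh i h}"
  have hs_sub: "hs \<subseteq> {1..m}" unfolding hs_def using goodh_props(1) by blast
  have hs_fin: "finite hs" using hs_sub finite_subset by blast
  have hs_ne: "hs \<noteq> {}" using good_ex[OF i0] i0 unfolding hs_def by blast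
  define g' where "g' = Max hs"
  have "g' \<in> hs" unfolding g'_def using hs_fin hs_ne by (rule Max_in)
  then obtain istar where istar: "istar \<in> {1..n}" "istar \<notin> Bad" "goodh istar g'"
    unfolding hs_def by blast
  have g'm: "g' \<in> {1..m}" "g' \<noteq> g" using goodh_props(1)[OF istar(3)] istar(3)
    unfolding goodh_def by auto
  define fine where "fine j \<longleftrightarrow> mms v (n-1) ({1..m} - {g,g'}) j \<ge> mms v n {1..m} j" for j
  define acc where "acc j \<longleftrightarrow> val v j {g,g'} \<ge> mms v n {1..m} j" for j
  have nn: "\<forall>x\<in>{1..m}. v j x \<ge> 0" if "j \<in> {1..n}" for j
    using assms(2) that unfolding ordered_instance_def by blast
  have good_fine: "fine j" if j: "j \<in> {1..n}" "j \<notin> Bad" for j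
  proof -
    obtain h where h: "goodh j h" using good_ex[OF j] by blast
    have "h \<in> hs" unfolding hs_def using h j by blast
    then have hle: "h \<le> g'" unfolding g'_def using hs_fin by (simp add: Max_ge)
    have hm: "h \<in> {1..m}" "h \<noteq> g" using goodh_props(1)[OF h] h unfolding goodh_def by auto
    obtain A b0 where A: "is_partition n {1..m} A" "b0 \<in> {1..n}" "A b0 = {g,h}"
      "\<forall>j'\<in>{1..n}. val v j (A j') \<ge> mms v n {1..m} j" using goodh_props(2)[OF h] by blast
    have cond: "g' \<in> A b0 \<or> val v j (A b0 - {g}) \<ge> v j g'"
    proof (cases "h = g'")
      case True then show ?thesis using A by auto
    next
      case False
      have "A b0 - {g} = {h}" using A hm by auto
      moreover have "v j g' \<le> v j h" using ordered_mono[OF assms(2) j(1)] hm g'm hle by auto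
      ultimately show ?thesis by (simp add: val_def)
    qed
    show ?thesis unfolding fine_def
      by (rule reduce[OF A(1) _ assms(1) A(2) _ g'm(1) _ nn[OF j(1)] cond A(4)])
         (use A g'm in auto)
  qed
  have fine_or_acc: "fine j \<or> acc j" if j: "j \<in> {1..n}" for j
  proof -
    obtain P where P: "is_partition n {1..m} P" "\<forall>k\<in>{1..n}. val v j (P k) \<ge> mms v n {1..m} j"
      using mms_attained[of "{1..m}" n v j] assms(1) by auto
    obtain b0 where b0: "b0 \<in> {1..n}" "g \<in> P b0" using P(1) assms(3) unfolding is_partition_def by blast
    have Pb0: "P b0 \<subseteq> {1..m}" using P(1) b0 unfolding is_partition_def by blast
    show ?thesis
    proof (cases "g' \<in> P b0 \<or> val v j (P b0 - {g}) \<ge> v j g'")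
      case True
      have "fine j" unfolding fine_def
        by (rule reduce[OF P(1) _ assms(1) b0 g'm(1) _ nn[OF j] True P(2)]) (use g'm in auto)
      then show ?thesis by blast
    next
      case False
      have fP: "finite (P b0)" using Pb0 finite_subset by blast
      have "val v j (P b0 - {g}) = val v j (P b0) - v j g" using fP b0(2) by (rule val_remove)
      moreover have "val v j {g,g'} = v j g + v j g'" using g'm by (simp add: val_def)
      ultimately have "acc j" unfolding acc_def using False P(2) b0 by force
      then show ?thesis by blast
    qed
  qed
  have acc_istar: "acc istar"
  proof -
    obtain A b0 where A: "is_partition n {1..m} A" "b0 \<in> {1..n}" "A b0 = {g,g'}"
      "\<forall>j'\<in>{1..n}. val v istar (A j') \<ge> mms v n {1..m} istar"
      using goodh_props(2)[OF istar(3)] by blast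
    then show ?thesis unfolding acc_def by metis
  qed
  show ?thesis
  proof (cases "\<forall>j\<in>{1..n}-{istar}. fine j")
    case True
    then have "valid_reduction_single v n m istar {g, g'}"
      unfolding valid_reduction_single_def using acc_istar unfolding acc_def fine_def by blast
    then show ?thesis using istar g'm by blast
  next
    case False
    then obtain j where j: "j \<in> {1..n}" "j \<noteq> istar" "\<not> fine j" by blast
    have jB: "j \<in> Bad" using good_fine j by blast
    have aj: "acc j" using fine_or_acc j by blast
    have others: "fine k" if k: "k \<in> {1..n} - {j}" for k
    proof -
      have "k \<notin> Bad"
      proof
        assume "k \<in> Bad"
        then have "{j,k} \<subseteq> Bad" using jB by blast
        then have "card {j,k} \<le> card Bad" using fB by (rule card_mono[rotated])
        then show False using cB k by simp
      qed
      then show ?thesis using good_fine k by blast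
    qed
    have "valid_reduction_single v n m j {g, g'}"
      unfolding valid_reduction_single_def using aj others unfolding acc_def fine_def by blast
    then show ?thesis using j g'm by blast
  qed
qed

end
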